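(* Suppose $E,F\subset\mathcal{T}$ are disjoint stopping times with $F\succ E$. Then: (1) There is a function $h$ on $\mathcal{T}$, admissible for $Cap_{\mathcal{T}}(E,F)$, with $Cap_{\mathcal{T}}(E,F)=\|h\|_{\ell^2}^2$. Put $H=Ih$. (2) $H$ is harmonic on $\mathcal{T}\setminus(E\cup F)$. (3) If $S$ is any stopping time in $\mathcal{T}$, then $\sum_{\kappa\in S}|h(\kappa)|\le2\,Cap_{\mathcal{T}}(E,F)$. (4) $h$ is positive on $\mathcal{G}(E,F)$ and zero elsewhere.
   Context: Tree. $\mathcal{T}$ is the rooted dyadic tree with root $o$ (vertices are the dyadic arcs of the unit circle, each vertex $x$ having two children $x_+,x_-$ and, if $x\ne o$, a parent $x^{-1}$). Write $y\le x$ if $x$ lies in the subtree rooted at $y$, and $y<x$ if moreover $y\ne x$. $[o,x]=\{y:y\le x\}$ and $S(x)=\{y:y\ge x\}$. A stopping time is a set of pairwise incomparable vertices. For stopping times $E,F$, write $F\succ E$ if every $x\in F$ has some $y\in E$ with $y<x$. $\mathcal{G}(E,F)$ is the union of all geodesics $[y,x]=\{z:y\le z\le x\}$ with $x\in F$ and $y\in E$, $y<x$. Capacity. For $f:\mathcal{T}\to\mathbb{R}$ put $If(x)=\sum_{y\in[o,x]}f(y)$. The condenser capacity is $Cap_{\mathcal{T}}(E,F)=\inf\{\|f\|^2_{\ell^2(\mathcal{T})}:If\ge1\text{ on }F,\ \operatorname{supp}f\subset\bigcup_{e\in E}S(e)\}$. Functions satisfying these two constraints are called admissible. Harmonicity.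 For $\Omega\subset\mathcal{T}$, a vertex $x$ is interior to $\Omega$ if $x,x^{-1},x_+,x_-\in\Omega$. A function $H$ is harmonic in $\Omega$ if $H(x)=\frac13[H(x^{-1})+H(x_+)+H(x_-)]$ for every interior point $x$ of $\Omega$. *)

theory Defs
  imports "HOL-Analysis.Analysis" "HOL-Library.Sublist"
begin

text \<open>Vertices of the rooted dyadic tree are finite binary words (paths from the root);
  the root o is the empty word, the children of x are x@[True] and x@[False],
  the parent of x \<noteq> [] is butlast x.  y \<le> x in the tree order iff y is a prefix of x.\<close>

type_synonym vertex = "bool list"

definition stopping_time :: "vertex set \<Rightarrow> bool" where
  "stopping_time S \<longleftrightarrow> (\<forall>x\<in>S. \<forall>y\<in>S. prefix x y \<longrightarrow> x = y)"

definition succ_st :: "vertex set \<Rightarrow> vertex set \<Rightarrow> bool" where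
  "succ_st F E \<longleftrightarrow> (\<forall>x\<in>F. \<exists>y\<in>E. strict_prefix y x)"

definition geod_union :: "vertex set \<Rightarrow> vertex set \<Rightarrow> vertex set" where
  "geod_union E F = {z. \<exists>x\<in>F. \<exists>y\<in>E. strict_prefix y x \<and> prefix y z \<and> prefix z x}"

definition Iop :: "(vertex \<Rightarrow> real) \<Rightarrow> vertex \<Rightarrow> real" where
  "Iop f x = (\<Sum>y\<in>{y. prefix y x}. f y)"

definition l2sq :: "(vertex \<Rightarrow> real) \<Rightarrow> ennreal" where
  "l2sq f = (\<Sum>\<^sub>\<infinity>x. ennreal ((f x)\<^sup>2))"

definition admissible :: "vertex set \<Rightarrow> vertex set \<Rightarrow> (vertex \<Rightarrow> real) \<Rightarrow> bool" where
  "admissible E F f \<longleftrightarrow> (\<forall>x\<in>F. Iop f x \<ge> 1) \<and> (\<forall>x. f x \<noteq> 0 \<longrightarrow> (\<exists>e\<in>E. prefix e x))"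

definition Cap :: "vertex set \<Rightarrow> vertex set \<Rightarrow> ennreal" where
  "Cap E F = (INF f \<in> {f. admissible E F f}. l2sq f)"

definition interior_pt :: "vertex set \<Rightarrow> vertex \<Rightarrow> bool" where
  "interior_pt \<Omega> x \<longleftrightarrow> x \<noteq> [] \<and> x \<in> \<Omega> \<and> butlast x \<in> \<Omega> \<and> x @ [True] \<in> \<Omega> \<and> x @ [False] \<in> \<Omega>"

definition harmonic_on :: "vertex set \<Rightarrow> (vertex \<Rightarrow> real) \<Rightarrow> bool" where
  "harmonic_on \<Omega> H \<longleftrightarrow> (\<forall>x. interior_pt \<Omega> x \<longrightarrow>
     H x = (H (butlast x) + H (x @ [True]) + H (x @ [False])) / 3)"

end

theory Submission
  imports Defs
begin


lemma prefix_set_eq: "{y. prefix y x} = set (prefixes x)"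
  by (auto simp: in_set_prefixes)

lemma finite_prefix_set[simp]: "finite {y. prefix y x}"
  unfolding prefix_set_eq by simp

lemma Iop_Nil: "Iop h [] = h []"
  unfolding Iop_def by simp

lemma Iop_snoc: "Iop h (x @ [b]) = Iop h x + h (x @ [b])"
proof -
  have "{y. prefix y (x @ [b])} = insert (x @ [b]) {y. prefix y x}"
    by (auto simp: prefix_snoc)
  moreover have "x @ [b] \<notin> {y. prefix y x}"
    by (auto dest: prefix_length_le)
  ultimately show ?thesis unfolding Iop_def by (simp add: add.commute)
qed

lemma Iop_butlast: "x \<noteq> [] \<Longrightarrow> Iop h x = Iop h (butlast x) + h x"
  by (metis Iop_snoc append_butlast_last_id)

lemma Iop_upd: "Iop (h(y := v)) f = Iop h f + (if prefix y f then v - h y else 0)"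
proof -
  have "Iop (h(y := v)) f = (\<Sum>z\<in>{z. prefix z f}. h z + (if z = y then v - h y else 0))"
    unfolding Iop_def by (rule sum.cong) auto
  also have "\<dots> = Iop h f + (\<Sum>z\<in>{z. prefix z f}. (if z = y then v - h y else 0))"
    unfolding Iop_def by (simp add: sum.distrib)
  also have "(\<Sum>z\<in>{z. prefix z f}. (if z = y then v - h y else 0)) = (if prefix y f then v - h y else 0)"
    by (subst sum.delta) auto
  finally show ?thesis .
qed

lemma Iop_mono: "(\<And>x. g x \<le> h x) \<Longrightarrow> Iop g f \<le> Iop h f"
  unfolding Iop_def by (rule sum_mono) auto

lemma Iop_nonneg: "(\<And>x. 0 \<le> h x) \<Longrightarrow> 0 \<le> Iop h f"
  unfolding Iop_def by (rule sum_nonneg) auto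

lemma Iop_prefix_mono: "(\<And>x. 0 \<le> h x) \<Longrightarrow> prefix y f \<Longrightarrow> Iop h y \<le> Iop h f"
  unfolding Iop_def by (rule sum_mono2) (auto intro: prefix_order.trans)



definition N :: "(vertex \<Rightarrow> real) \<Rightarrow> real" where
  "N f = (\<Sum>\<^sub>\<infinity>x. (f x)\<^sup>2)"

definition sqs :: "(vertex \<Rightarrow> real) \<Rightarrow> bool" where
  "sqs f \<longleftrightarrow> (\<lambda>x. (f x)\<^sup>2) summable_on UNIV"

lemma l2sq_SUP: "l2sq f = (SUP A\<in>{A. finite A \<and> A \<subseteq> UNIV}. ennreal (\<Sum>x\<in>A. (f x)\<^sup>2))"
proof -
  have "l2sq f = (SUP A\<in>{A. finite A \<and> A \<subseteq> UNIV}. (\<Sum>x\<in>A. ennreal ((f x)\<^sup>2)))"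
    unfolding l2sq_def by (rule nonneg_infsum_complete) auto
  also have "\<dots> = (SUP A\<in>{A. finite A \<and> A \<subseteq> UNIV}. ennreal (\<Sum>x\<in>A. (f x)\<^sup>2))"
    by (rule SUP_cong) (auto simp: sum_ennreal)
  finally show ?thesis .
qed

lemma l2sq_eq: "sqs f \<Longrightarrow> l2sq f = ennreal (N f)"
  unfolding l2sq_SUP N_def sqs_def
  by (subst infsum_nonneg_is_SUPREMUM_ennreal) auto

lemma l2sq_fin: assumes "l2sq f < \<infinity>" shows "sqs f"
proof -
  have "\<And>A. finite A \<Longrightarrow> (\<Sum>x\<in>A. (f x)\<^sup>2) \<le> enn2real (l2sq f)"
  proof -
    fix A :: "vertex set" assume "finite A"
    hence "ennreal (\<Sum>x\<in>A. (f x)\<^sup>2) \<le> l2sq f" unfolding l2sq_SUP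
      by (intro SUP_upper) auto
    thus "(\<Sum>x\<in>A. (f x)\<^sup>2) \<le> enn2real (l2sq f)"
    proof -
      assume a: "ennreal (\<Sum>x\<in>A. (f x)\<^sup>2) \<le> l2sq f"
      have "enn2real (ennreal (\<Sum>x\<in>A. (f x)\<^sup>2)) \<le> enn2real (l2sq f)"
        using enn2real_mono[OF a] assms by simp
      thus ?thesis by (simp add: sum_nonneg)
    qed
  qed
  hence "bdd_above (sum (\<lambda>x. (f x)\<^sup>2) ` {A. A \<subseteq> UNIV \<and> finite A})"
    by (intro bdd_aboveI[where M="enn2real (l2sq f)"]) auto
  thus ?thesis unfolding sqs_def by (intro nonneg_bdd_above_summable_on) auto
qed

lemma sqs_subset: "sqs f \<Longrightarrow> (\<lambda>x. (f x)\<^sup>2) summable_on B"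
  unfolding sqs_def by (rule summable_on_subset_banach) auto

lemma N_split: assumes "sqs f" shows "N f = (\<Sum>\<^sub>\<infinity>x\<in>B. (f x)\<^sup>2) + (\<Sum>\<^sub>\<infinity>x\<in>-B. (f x)\<^sup>2)"
proof -
  have "N f = (\<Sum>\<^sub>\<infinity>x\<in>B \<union> -B. (f x)\<^sup>2)" unfolding N_def by simp
  also have "\<dots> = (\<Sum>\<^sub>\<infinity>x\<in>B. (f x)\<^sup>2) + (\<Sum>\<^sub>\<infinity>x\<in>-B. (f x)\<^sup>2)"
    by (rule infsum_Un_disjoint) (auto intro: sqs_subset[OF assms])
  finally show ?thesis .
qed

lemma N_modify:
  assumes "sqs h" "\<And>x. x \<notin> B \<Longrightarrow> g x = h x" "(\<lambda>x. (g x)\<^sup>2) summable_on B"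
  shows "sqs g" "N g = N h - (\<Sum>\<^sub>\<infinity>x\<in>B. (h x)\<^sup>2) + (\<Sum>\<^sub>\<infinity>x\<in>B. (g x)\<^sup>2)"
proof -
  have c0: "(\<lambda>x. (h x)\<^sup>2) summable_on -B" by (rule sqs_subset[OF assms(1)])
  have c: "(\<lambda>x. (g x)\<^sup>2) summable_on -B"
    using c0 by (rule summable_on_cong[THEN iffD1, rotated]) (simp add: assms(2))
  have "(\<lambda>x. (g x)\<^sup>2) summable_on (B \<union> -B)"
    by (rule summable_on_Un_disjoint[OF assms(3) c]) auto
  thus sg: "sqs g" unfolding sqs_def by simp
  have e: "(\<Sum>\<^sub>\<infinity>x\<in>-B. (g x)\<^sup>2) = (\<Sum>\<^sub>\<infinity>x\<in>-B. (h x)\<^sup>2)"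
    by (rule infsum_cong) (simp add: assms(2))
  show "N g = N h - (\<Sum>\<^sub>\<infinity>x\<in>B. (h x)\<^sup>2) + (\<Sum>\<^sub>\<infinity>x\<in>B. (g x)\<^sup>2)"
    using N_split[OF sg, of B] N_split[OF assms(1), of B] e by simp
qed

lemma N_modify_fin:
  assumes "sqs h" "finite B" "\<And>x. x \<notin> B \<Longrightarrow> g x = h x"
  shows "sqs g" "N g = N h - (\<Sum>x\<in>B. (h x)\<^sup>2) + (\<Sum>x\<in>B. (g x)\<^sup>2)"
  using N_modify[OF assms(1,3)] assms(2) by auto

lemma quad_zero:
  fixes \<alpha> \<beta> :: real
  assumes "\<alpha> \<ge> 0" "\<And>t. \<bar>t\<bar> \<le> 1 \<Longrightarrow> \<alpha> * t\<^sup>2 + \<beta> * t \<ge> 0"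
  shows "\<beta> = 0"
proof (rule ccontr)
  assume b: "\<beta> \<noteq> 0"
  define c where "c = 2 * (\<alpha> + \<bar>\<beta>\<bar> + 1)"
  have c0: "c > 0" "c \<ge> 2 * \<bar>\<beta>\<bar>" "c > \<alpha>" using assms(1) by (auto simp: c_def)
  define t where "t = - \<beta> / c"
  have "\<bar>t\<bar> \<le> 1" using c0 by (auto simp: t_def abs_divide field_simps)
  hence "\<alpha> * t\<^sup>2 + \<beta> * t \<ge> 0" by (rule assms(2))
  moreover have "\<alpha> * t\<^sup>2 + \<beta> * t = \<beta>\<^sup>2 * (\<alpha> - c) / c\<^sup>2"
    using c0 by (simp add: t_def power2_eq_square field_simps)
  moreover have "\<beta>\<^sup>2 * (\<alpha> - c) / c\<^sup>2 < 0" using b c0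
    by (intro divide_neg_pos mult_pos_neg) auto
  ultimately show False by linarith
qed




definition Mini :: "vertex set \<Rightarrow> vertex set \<Rightarrow> (vertex \<Rightarrow> real) \<Rightarrow> bool" where
  "Mini E F h \<longleftrightarrow> admissible E F h \<and> sqs h \<and> (\<forall>g. admissible E F g \<longrightarrow> sqs g \<longrightarrow> N h \<le> N g)"

lemma N_upd: assumes "sqs h" shows "sqs (h(x := v))" "N (h(x := v)) = N h - (h x)\<^sup>2 + v\<^sup>2"
  using N_modify_fin[OF assms, of "{x}" "h(x:=v)"] by auto

lemma adm_upd:
  assumes "admissible E F h" "\<And>f. f \<in> F \<Longrightarrow> prefix x f \<Longrightarrow> Iop h f + v - h x \<ge> 1"
    "v \<noteq> 0 \<Longrightarrow> \<exists>e\<in>E. prefix e x"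
  shows "admissible E F (h(x := v))"
  using assms unfolding admissible_def by (auto simp: Iop_upd add_diff_eq)

lemma prefix_child:
  assumes "prefix x f" "f \<noteq> x" shows "\<exists>b. prefix (x @ [b]) f"
proof -
  obtain z where z: "f = x @ z" using assms(1) prefixE by blast
  with assms(2) obtain c zs where "z = c # zs" by (cases z) auto
  thus ?thesis using z by (intro exI[of _ c]) auto
qed

lemma prefix_children_not_both:
  "prefix (x @ [True]) f \<Longrightarrow> prefix (x @ [False]) f \<Longrightarrow> False"
proof -
  assume a: "prefix (x @ [True]) f" and b: "prefix (x @ [False]) f"
  from prefix_same_cases[OF a b] show False by simp
qed

context
  fixes E F :: "vertex set" and h :: "vertex \<Rightarrow> real"
  assumes stE: "stopping_time E" and stF: "stopping_time F" and disj: "E \<inter> F = {}"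
    and succ: "succ_st F E" and Minih: "Mini E F h"
begin

lemma adm: "admissible E F h" and sqsh: "sqs h"
  and minimal: "\<And>g. admissible E F g \<Longrightarrow> sqs g \<Longrightarrow> N h \<le> N g"
  using Minih unfolding Mini_def by auto

lemma supp: "h x \<noteq> 0 \<Longrightarrow> \<exists>e\<in>E. prefix e x"
  using adm unfolding admissible_def by auto

lemma Fge: "f \<in> F \<Longrightarrow> Iop h f \<ge> 1"
  using adm unfolding admissible_def by auto

lemma upd_min: assumes "admissible E F (h(x:=v))" shows "(h x)\<^sup>2 \<le> v\<^sup>2"
  using minimal[OF assms N_upd(1)[OF sqsh]] N_upd(2)[OF sqsh, of x v] by simp

lemma nonneg: "h x \<ge> 0"
proof (rule ccontr)
  assume a: "\<not> h x \<ge> 0"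
  have "admissible E F (h(x:=0))"
  proof (rule adm_upd[OF adm])
    fix f assume "f \<in> F" thus "Iop h f + 0 - h x \<ge> 1" using Fge[of f] a by linarith
  qed simp
  from upd_min[OF this] a show False by simp
qed

lemma zero_noF: assumes "\<And>f. f \<in> F \<Longrightarrow> \<not> prefix x f" shows "h x = 0"
proof (rule ccontr)
  assume a: "h x \<noteq> 0"
  have "admissible E F (h(x:=0))"
    by (rule adm_upd[OF adm]) (use assms in auto)
  from upd_min[OF this] a show False by simp
qed

lemma Iop_le1: "Iop h x \<le> 1"
proof (rule ccontr)
  assume a: "\<not> Iop h x \<le> 1"
  define P where "P n \<longleftrightarrow> Iop h (take n x) > 1" for n
  have Px: "P (length x)" using a by (simp add: P_def)
  define n where "n = (LEAST n. P n)"
  have Pn: "P n" unfolding n_def by (rule LeastI[of P, OF Px])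
  have nle: "n \<le> length x" unfolding n_def by (rule Least_le[of P, OF Px])
  define y where "y = take n x"
  have hy: "h y > 0"
  proof (cases n)
    case 0 thus ?thesis using Pn by (simp add: P_def y_def Iop_Nil)
  next
    case (Suc m)
    have "m < n" using Suc by simp
    hence "\<not> P m" unfolding n_def by (rule not_less_Least)
    hence m1: "Iop h (take m x) \<le> 1" unfolding P_def by simp
    have "y = take m x @ [x ! m]" unfolding y_def Suc
      by (rule take_Suc_conv_app_nth) (use Suc nle in auto)
    hence "Iop h y = Iop h (take m x) + h y" using Iop_snoc[of h "take m x" "x ! m"] by simp
    moreover have "Iop h y > 1" using Pn unfolding P_def y_def .
    ultimately show ?thesis using m1 by linarith
  qed
  have Iy: "Iop h y > 1" using Pn by (simp add: P_def y_def)
  define t where "t = min (h y) (Iop h y - 1)"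
  have t: "t > 0" "t \<le> h y" "t \<le> Iop h y - 1" using hy Iy by (auto simp: t_def)
  have "admissible E F (h(y := h y - t))"
  proof (rule adm_upd[OF adm])
    fix f assume "f \<in> F" "prefix y f"
    hence "Iop h y \<le> Iop h f" by (intro Iop_prefix_mono nonneg)
    thus "Iop h f + (h y - t) - h y \<ge> 1" using t by simp
  next
    assume "h y - t \<noteq> 0" show "\<exists>e\<in>E. prefix e y" using supp hy by auto
  qed
  from upd_min[OF this] have "(h y)\<^sup>2 \<le> (h y - t)\<^sup>2" .
  moreover have "(h y - t)\<^sup>2 < (h y)\<^sup>2" using t hy by (intro power_strict_mono) auto
  ultimately show False by linarith
qed

lemma conservation:
  assumes ex: "\<exists>e\<in>E. prefix e x" and xF: "x \<notin> F"
  shows "h x = h (x @ [True]) + h (x @ [False])"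
proof -
  define a where "a = h x"
  define b where "b = h (x @ [True])"
  define c where "c = h (x @ [False])"
  define g where "g t = h(x := a + t, x @ [True] := b - t, x @ [False] := c - t)" for t
  have d: "x \<noteq> x @ [True]" "x \<noteq> x @ [False]" "x @ [True] \<noteq> x @ [False]" by auto
  have Ig: "Iop (g t) f = Iop h f + (if prefix x f then t else 0) - (if prefix (x@[True]) f then t else 0)
      - (if prefix (x@[False]) f then t else 0)" for t f
    unfolding g_def using d by (simp add: Iop_upd a_def b_def c_def)
  have adm_g: "admissible E F (g t)" for t
    unfolding admissible_def
  proof (intro conjI ballI allI impI)
    fix f assume f: "f \<in> F"
    show "Iop (g t) f \<ge> 1"
    proof (cases "prefix x f")
      case True
      with f xF have "f \<noteq> x" by auto
      then obtain bb where "prefix (x @ [bb]) f" using prefix_child True by blast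
      moreover have "\<not> (prefix (x@[True]) f \<and> prefix (x@[False]) f)"
        using prefix_children_not_both by blast
      ultimately show ?thesis using Fge[OF f] True unfolding Ig by (cases bb) auto
    next
      case False
      hence "\<not> prefix (x@[True]) f" "\<not> prefix (x@[False]) f"
        by (meson append_prefixD)+
      thus ?thesis using Fge[OF f] False unfolding Ig by auto
    qed
  next
    fix y assume "g t y \<noteq> 0"
    show "\<exists>e\<in>E. prefix e y"
    proof (cases "y \<in> {x, x@[True], x@[False]}")
      case True thus ?thesis using ex by (auto intro: prefix_order.trans)
    next
      case False thus ?thesis using \<open>g t y \<noteq> 0\<close> supp unfolding g_def by auto
    qed
  qed
  have Ng: "N (g t) = N h - (a\<^sup>2 + b\<^sup>2 + c\<^sup>2) + ((a+t)\<^sup>2 + (b-t)\<^sup>2 + (c-t)\<^sup>2)"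
      and sg: "sqs (g t)" for t
  proof -
    have fin: "finite {x, x@[True], x@[False]}" by simp
    have eq: "\<And>y. y \<notin> {x, x@[True], x@[False]} \<Longrightarrow> g t y = h y" unfolding g_def by auto
    show "sqs (g t)" by (rule N_modify_fin(1)[OF sqsh fin eq])
    show "N (g t) = N h - (a\<^sup>2 + b\<^sup>2 + c\<^sup>2) + ((a+t)\<^sup>2 + (b-t)\<^sup>2 + (c-t)\<^sup>2)"
    proof -
      have "N (g t) = N h - (\<Sum>y\<in>{x, x@[True], x@[False]}. (h y)\<^sup>2) + (\<Sum>y\<in>{x, x@[True], x@[False]}. (g t y)\<^sup>2)"
        by (rule N_modify_fin(2)[OF sqsh fin eq])
      moreover have "(\<Sum>y\<in>{x, x@[True], x@[False]}. (h y)\<^sup>2) = a\<^sup>2 + b\<^sup>2 + c\<^sup>2"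
        using d by (simp add: a_def b_def c_def)
      moreover have "(\<Sum>y\<in>{x, x@[True], x@[False]}. (g t y)\<^sup>2) = (a+t)\<^sup>2 + (b-t)\<^sup>2 + (c-t)\<^sup>2"
        using d by (simp add: g_def)
      ultimately show ?thesis by simp
    qed
  qed
  have "3 * t\<^sup>2 + (2 * (a - b - c)) * t \<ge> 0" if "\<bar>t\<bar> \<le> 1" for t
    using minimal[OF adm_g sg, of t] unfolding Ng by (simp add: power2_eq_square algebra_simps)
  hence "2 * (a - b - c) = 0" by (intro quad_zero[of 3]) auto
  thus ?thesis by (simp add: a_def b_def c_def)
qed

end



lemma prefix_of_same: "prefix a f \<Longrightarrow> prefix b f \<Longrightarrow> length a \<le> length b \<Longrightarrow> prefix a b"
  by (metis prefix_length_le prefix_same_cases prefix_length_prefix)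

lemma stop_eq: "stopping_time S \<Longrightarrow> a \<in> S \<Longrightarrow> b \<in> S \<Longrightarrow> prefix a f \<Longrightarrow> prefix b f \<Longrightarrow> a = b"
  unfolding stopping_time_def by (metis prefix_same_cases)

context
  fixes E F :: "vertex set" and h :: "vertex \<Rightarrow> real"
  assumes stE: "stopping_time E" and stF: "stopping_time F" and disj: "E \<inter> F = {}"
    and succ: "succ_st F E" and Minih: "Mini E F h"
begin

lemmas ctx = stE stF disj succ Minih

lemma energy:
  assumes e: "e \<in> E" shows "(\<Sum>\<^sub>\<infinity>y\<in>{y. prefix e y}. (h y)\<^sup>2) = h e"
proof -
  define S where "S = {y. prefix e y}"
  define S' where "S' = S - {e}"
  define a where "a = h e"
  define A where "A = (\<Sum>\<^sub>\<infinity>y\<in>S'. (h y)\<^sup>2)"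
  define g where "g t = (\<lambda>y. if prefix e y then (if y = e then (1-t)*a + t else (1-t) * h y) else h y)" for t
  have A0: "A \<ge> 0" unfolding A_def by (rule infsum_nonneg) auto
  have eS': "e \<notin> S'" and SS': "S = insert e S'" by (auto simp: S'_def S_def)
  have sh: "(\<lambda>y. (h y)\<^sup>2) summable_on S'" by (rule sqs_subset[OF sqsh[OF ctx]])
  have adm_g: "admissible E F (g t)" if t: "\<bar>t\<bar> \<le> 1" for t
    unfolding admissible_def
  proof (intro conjI ballI allI impI)
    fix f assume f: "f \<in> F"
    show "Iop (g t) f \<ge> 1"
    proof (cases "prefix e f")
      case True
      have gy: "g t y = (1-t) * h y + (if y = e then t else 0)" if y: "prefix y f" for y
      proof (cases "prefix e y")
        case True thus ?thesis by (auto simp: g_def a_def algebra_simps)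
      next
        case False
        have "h y = 0"
        proof (rule ccontr)
          assume "h y \<noteq> 0"
          then obtain e' where e': "e' \<in> E" "prefix e' y" using supp[OF ctx] by blast
          hence "prefix e' f" using y by (auto intro: prefix_order.trans)
          hence "e' = e" using stop_eq[OF stE e' (1) e] True by blast
          thus False using e' False by simp
        qed
        moreover have "y \<noteq> e" using False by auto
        ultimately show ?thesis using False by (simp add: g_def)
      qed
      have "Iop (g t) f = (\<Sum>y\<in>{y. prefix y f}. (1-t) * h y + (if y = e then t else 0))"
        unfolding Iop_def by (rule sum.cong) (auto simp: gy)
      also have "\<dots> = (1-t) * Iop h f + t"
        unfolding Iop_def using True by (simp add: sum.distrib sum_distrib_left)
      finally have "Iop (g t) f = (1-t) * Iop h f + t" .
      moreover have "(1-t) * (Iop h f - 1) \<ge> 0"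
        using Fge[OF ctx f] t by (intro mult_nonneg_nonneg) auto
      ultimately show ?thesis by (simp add: algebra_simps)
    next
      case False
      have "Iop (g t) f = Iop h f"
        unfolding Iop_def
        by (rule sum.cong) (use False in \<open>auto simp: g_def intro: prefix_order.trans\<close>)
      thus ?thesis using Fge[OF ctx f] by simp
    qed
  next
    fix y assume "g t y \<noteq> 0"
    thus "\<exists>e\<in>E. prefix e y" using e supp[OF ctx] by (cases "prefix e y") (auto simp: g_def)
  qed
  have gS': "(g t y)\<^sup>2 = (1-t)\<^sup>2 * (h y)\<^sup>2" if "y \<in> S'" for t y
    using that by (auto simp: g_def S'_def S_def power_mult_distrib)
  have sgS': "(\<lambda>y. (g t y)\<^sup>2) summable_on S'" for t
    using summable_on_cmult_right[OF sh, of "(1-t)\<^sup>2"]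
    by (rule summable_on_cong[THEN iffD1, rotated]) (simp add: gS')
  have sgS: "(\<lambda>y. (g t y)\<^sup>2) summable_on S" for t
    unfolding SS' using sgS' by (simp add: summable_on_insert_iff)
  have eqo: "y \<notin> S \<Longrightarrow> g t y = h y" for t y by (auto simp: g_def S_def)
  have sumg: "(\<Sum>\<^sub>\<infinity>y\<in>S. (g t y)\<^sup>2) = ((1-t)*a + t)\<^sup>2 + (1-t)\<^sup>2 * A" for t
  proof -
    have "(\<Sum>\<^sub>\<infinity>y\<in>S. (g t y)\<^sup>2) = (g t e)\<^sup>2 + (\<Sum>\<^sub>\<infinity>y\<in>S'. (g t y)\<^sup>2)"
      unfolding SS' by (rule infsum_insert[OF sgS' eS'])
    also have "(\<Sum>\<^sub>\<infinity>y\<in>S'. (g t y)\<^sup>2) = (\<Sum>\<^sub>\<infinity>y\<in>S'. (1-t)\<^sup>2 * (h y)\<^sup>2)"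
      by (rule infsum_cong) (simp add: gS')
    also have "\<dots> = (1-t)\<^sup>2 * A" unfolding A_def by (rule infsum_cmult_right[OF sh])
    finally show ?thesis by (simp add: g_def)
  qed
  have sumh: "(\<Sum>\<^sub>\<infinity>y\<in>S. (h y)\<^sup>2) = a\<^sup>2 + A"
    unfolding SS' A_def a_def by (rule infsum_insert[OF sh eS'])
  have "(A + (1-a)\<^sup>2) * t\<^sup>2 + (2*a*(1-a) - 2*A) * t \<ge> 0" if t: "\<bar>t\<bar> \<le> 1" for t
  proof -
    have "N h \<le> N (g t)"
      by (rule minimal[OF ctx adm_g[OF t] N_modify(1)[OF sqsh[OF ctx] eqo sgS]])
    moreover have "N (g t) = N h - (\<Sum>\<^sub>\<infinity>y\<in>S. (h y)\<^sup>2) + (\<Sum>\<^sub>\<infinity>y\<in>S. (g t y)\<^sup>2)"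
      by (rule N_modify(2)[OF sqsh[OF ctx] eqo sgS])
    ultimately have "0 \<le> ((1-t)*a + t)\<^sup>2 + (1-t)\<^sup>2 * A - (a\<^sup>2 + A)"
      unfolding sumg sumh by simp
    thus ?thesis by (simp add: power2_eq_square algebra_simps)
  qed
  hence "2*a*(1-a) - 2*A = 0" by (intro quad_zero[of "A + (1-a)\<^sup>2"]) (use A0 in auto)
  hence "A = a*(1-a)" by simp
  thus ?thesis using sumh unfolding S_def a_def by (simp add: power2_eq_square algebra_simps)
qed


lemma take_prefix_len: "prefix x f \<Longrightarrow> take (length x) f = x"
  by (metis append_eq_conv_conj prefixE)

lemma notF_strict: "prefix q f \<Longrightarrow> f \<in> F \<Longrightarrow> length q < length f \<Longrightarrow> q \<notin> F"
  using stF unfolding stopping_time_def by auto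

lemma positive_geod: assumes "x \<in> geod_union E F" shows "h x > 0"
proof (rule ccontr)
  assume nx: "\<not> h x > 0"
  obtain f e where f: "f \<in> F" and e: "e \<in> E" and ef: "strict_prefix e f" and ex: "prefix e x"
    and xf: "prefix x f"
    using assms unfolding geod_union_def by blast
  have hx: "h x = 0" using nx nonneg[OF ctx, of x] by simp
  have lx: "length x \<le> length f" using xf prefix_length_le by blast
  have zeros: "length x + k \<le> length f \<Longrightarrow> h (take (length x + k) f) = 0" for k
  proof (induction k)
    case 0 thus ?case using take_prefix_len[OF xf] hx by simp
  next
    case (Suc k)
    define z where "z = take (length x + k) f"
    have lz: "length z = length x + k" using Suc.prems by (simp add: z_def)
    have hz: "h z = 0" using Suc by (simp add: z_def)
    have zf: "prefix z f" by (simp add: z_def take_is_prefix)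
    have xz: "prefix x z" by (rule prefix_of_same[OF xf zf]) (simp add: lz)
    have ez: "\<exists>e\<in>E. prefix e z" using e ex xz by (auto intro: prefix_order.trans)
    have zF: "z \<notin> F" by (rule notF_strict[OF zf f]) (use lz Suc.prems in simp)
    have c: "h z = h (z @ [True]) + h (z @ [False])" by (rule conservation[OF ctx ez zF])
    have "h (z @ [b]) = 0" for b using c hz nonneg[OF ctx, of "z@[True]"] nonneg[OF ctx, of "z@[False]"]
      by (cases b) auto
    moreover have "take (length x + Suc k) f = z @ [f ! (length x + k)]"
      unfolding z_def using Suc.prems by (simp add: take_Suc_conv_app_nth)
    ultimately show ?case by simp
  qed
  define P where "P k \<longleftrightarrow> k \<le> length f \<and> h (take k f) > 0" for k
  have "\<exists>y\<in>{y. prefix y f}. h y > 0"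
  proof (rule ccontr)
    assume "\<not> ?thesis"
    hence "Iop h f \<le> 0" unfolding Iop_def by (intro sum_nonpos) auto
    thus False using Fge[OF ctx f] by simp
  qed
  then obtain y where y: "prefix y f" "h y > 0" by blast
  have Py: "P (length y)" using y take_prefix_len[OF y(1)] prefix_length_le[OF y(1)] by (simp add: P_def)
  have bnd: "\<forall>k. P k \<longrightarrow> k \<le> length f" by (simp add: P_def)
  define m where "m = (GREATEST k. P k)"
  have Pm: "P m" unfolding m_def by (rule GreatestI_nat[of P, OF Py]) (use bnd in blast)
  have gm: "P k \<Longrightarrow> k \<le> m" for k unfolding m_def by (rule Greatest_le_nat[of P]) (use bnd in blast)+
  have mx: "m < length x"
  proof (rule ccontr)
    assume "\<not> m < length x"
    hence "h (take (length x + (m - length x)) f) = 0" using Pm by (intro zeros) (auto simp: P_def)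
    thus False using Pm \<open>\<not> m < length x\<close> by (simp add: P_def)
  qed
  define q where "q = take m f"
  have hq: "h q > 0" using Pm by (simp add: P_def q_def)
  have lq: "length q = m" using mx lx by (simp add: q_def)
  have qf: "prefix q f" by (simp add: q_def take_is_prefix)
  have above0: "k \<le> length f \<Longrightarrow> m < k \<Longrightarrow> h (take k f) = 0" for k
    using gm[of k] nonneg[OF ctx, of "take k f"] by (force simp: P_def)
  have Iq: "m + j \<le> length f \<Longrightarrow> Iop h (take (m + j) f) = Iop h q" for j
  proof (induction j)
    case 0 thus ?case by (simp add: q_def)
  next
    case (Suc j)
    have "take (m + Suc j) f = take (m + j) f @ [f ! (m + j)]"
      using Suc.prems by (simp add: take_Suc_conv_app_nth)
    hence "Iop h (take (m + Suc j) f) = Iop h (take (m + j) f) + h (take (m + Suc j) f)"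
      by (simp add: Iop_snoc)
    moreover have "h (take (m + Suc j) f) = 0" using Suc.prems by (intro above0) auto
    ultimately show ?case using Suc by simp
  qed
  have "Iop h q = Iop h f" using Iq[of "length f - m"] mx lx by simp
  hence Iq1: "Iop h q \<ge> 1" using Fge[OF ctx f] by simp
  have eq: "\<exists>e\<in>E. prefix e q" using supp[OF ctx] hq by auto
  have qF: "q \<notin> F" by (rule notF_strict[OF qf f]) (use lq mx lx in simp)
  have c: "h q = h (q @ [True]) + h (q @ [False])" by (rule conservation[OF ctx eq qF])
  define b where "b = f ! m"
  have "take (Suc m) f = q @ [b]" unfolding q_def b_def using mx lx by (simp add: take_Suc_conv_app_nth)
  hence hb: "h (q @ [b]) = 0" using above0[of "Suc m"] mx lx by simp
  have hnb: "h (q @ [\<not> b]) = h q" using c hb by (cases b) auto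
  have "Iop h (q @ [\<not> b]) = Iop h q + h q" by (simp add: Iop_snoc hnb)
  hence "Iop h (q @ [\<not> b]) > 1" using Iq1 hq by simp
  thus False using Iop_le1[OF ctx] by (simp add: not_less[symmetric])
qed

lemma zero_off_geod: assumes "x \<notin> geod_union E F" shows "h x = 0"
proof (rule ccontr)
  assume a: "h x \<noteq> 0"
  then obtain e where e: "e \<in> E" "prefix e x" using supp[OF ctx] by blast
  obtain f where f: "f \<in> F" "prefix x f" using zero_noF[OF ctx, of x] a by blast
  have "e \<noteq> f" using disj e f by blast
  moreover have "prefix e f" using e f by (auto intro: prefix_order.trans)
  ultimately have "strict_prefix e f" by auto
  thus False using assms e f unfolding geod_union_def by blast
qed

lemma flow:
  assumes "\<exists>e\<in>E. prefix e y" "finite T" "stopping_time T" "\<forall>t\<in>T. prefix y t \<and> length t \<le> length y + n"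
  shows "(\<Sum>t\<in>T. h t) \<le> h y"
  using assms
proof (induction n arbitrary: y T)
  case 0
  hence "T \<subseteq> {y}" by (auto elim!: prefixE)
  hence "T = {} \<or> T = {y}" by auto
  thus ?case using nonneg[OF ctx, of y] by auto
next
  case (Suc n)
  show ?case
  proof (cases "y \<in> T")
    case True
    hence "T = {y}" using Suc.prems(3,4) unfolding stopping_time_def by auto
    thus ?thesis by simp
  next
    case yT: False
    show ?thesis
    proof (cases "y \<in> F")
      case True
      have "h t = 0" if t: "t \<in> T" for t
      proof (rule zero_noF[OF ctx])
        fix f assume f0: "f \<in> F"
        show "\<not> prefix t f"
        proof
          assume f1: "prefix t f"
          have yt: "prefix y t" using t Suc.prems(4) by auto
          hence "prefix y f" using f1 by (auto intro: prefix_order.trans)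
          hence "y = f" using stF True f0 unfolding stopping_time_def by auto
          hence "t = y" using yt f1 by auto
          thus False using t yT by simp
        qed
      qed
      hence "(\<Sum>t\<in>T. h t) = 0" by simp
      thus ?thesis using nonneg[OF ctx, of y] by simp
    next
      case yF: False
      define T1 where "T1 = {t\<in>T. prefix (y@[True]) t}"
      define T2 where "T2 = {t\<in>T. prefix (y@[False]) t}"
      have TU: "T = T1 \<union> T2"
      proof
        show "T \<subseteq> T1 \<union> T2"
        proof
          fix t assume t: "t \<in> T"
          hence "prefix y t" "t \<noteq> y" using Suc.prems(4) yT by auto
          then obtain b where "prefix (y @ [b]) t" using prefix_child by blast
          thus "t \<in> T1 \<union> T2" using t by (cases b) (auto simp: T1_def T2_def)
        qed
      qed (auto simp: T1_def T2_def)
      have dj: "T1 \<inter> T2 = {}" using prefix_children_not_both by (auto simp: T1_def T2_def)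
      have fin: "finite T1" "finite T2" using Suc.prems(2) by (auto simp: T1_def T2_def)
      have IH: "(\<Sum>t\<in>{t\<in>T. prefix (y@[b]) t}. h t) \<le> h (y @ [b])" for b
      proof (rule Suc.IH)
        show "\<exists>e\<in>E. prefix e (y @ [b])" using Suc.prems(1) by (auto intro: prefix_order.trans)
        show "finite {t \<in> T. prefix (y @ [b]) t}" using Suc.prems(2) by simp
        show "stopping_time {t \<in> T. prefix (y @ [b]) t}" using Suc.prems(3) unfolding stopping_time_def by auto
        show "\<forall>t\<in>{t \<in> T. prefix (y @ [b]) t}. prefix (y @ [b]) t \<and> length t \<le> length (y @ [b]) + n"
          using Suc.prems(4) by auto
      qed
      have "(\<Sum>t\<in>T. h t) = (\<Sum>t\<in>T1. h t) + (\<Sum>t\<in>T2. h t)"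
        unfolding TU using fin dj by (rule sum.union_disjoint)
      also have "\<dots> \<le> h (y@[True]) + h (y@[False])"
        using IH[of True] IH[of False] unfolding T1_def T2_def by simp
      also have "\<dots> = h y" using conservation[OF ctx Suc.prems(1) yF] by simp
      finally show ?thesis .
    qed
  qed
qed

lemma fin_bound:
  assumes S: "stopping_time S" and A: "finite A" "A \<subseteq> S"
  shows "(\<Sum>t\<in>A. h t) \<le> N h"
proof -
  define A' where "A' = {t\<in>A. h t \<noteq> 0}"
  have s1: "(\<Sum>t\<in>A. h t) = (\<Sum>t\<in>A'. h t)"
    by (rule sum.mono_neutral_right) (use A in \<open>auto simp: A'_def\<close>)
  define own where "own t = (THE e. e \<in> E \<and> prefix e t)" for t
  have own: "own t \<in> E \<and> prefix (own t) t" if "t \<in> A'" for t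
  proof -
    have "h t \<noteq> 0" using that by (simp add: A'_def)
    then obtain e where e: "e \<in> E" "prefix e t" using supp[OF ctx] by blast
    have "own t = e" unfolding own_def
      by (rule the_equality) (use e stop_eq[OF stE] in blast)+
    thus ?thesis using e by simp
  qed
  define Tset where "Tset = own ` A'"
  have finA': "finite A'" using A by (simp add: A'_def)
  have finT: "finite Tset" using finA' by (simp add: Tset_def)
  have s2: "(\<Sum>t\<in>A'. h t) = (\<Sum>e\<in>Tset. \<Sum>t\<in>{t. t \<in> A' \<and> own t = e}. h t)"
    by (rule sum.group[symmetric]) (use finA' finT in \<open>auto simp: Tset_def\<close>)
  define n where "n = Max (length ` A')"
  have inner: "(\<Sum>t\<in>{t. t \<in> A' \<and> own t = e}. h t) \<le> h e" if e: "e \<in> Tset" for e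
  proof (rule flow)
    show "\<exists>e'\<in>E. prefix e' e" using e own by (auto simp: Tset_def)
    show "finite {t. t \<in> A' \<and> own t = e}" using finA' by simp
    show "stopping_time {t. t \<in> A' \<and> own t = e}" using S A unfolding stopping_time_def A'_def by auto
    show "\<forall>t\<in>{t. t \<in> A' \<and> own t = e}. prefix e t \<and> length t \<le> length e + n"
    proof
      fix t assume t: "t \<in> {t. t \<in> A' \<and> own t = e}"
      have "length t \<le> n" unfolding n_def using t finA' by (intro Max_ge) auto
      thus "prefix e t \<and> length t \<le> length e + n" using own[of t] t by auto
    qed
  qed
  have s3: "(\<Sum>e\<in>Tset. h e) = (\<Sum>e\<in>Tset. \<Sum>\<^sub>\<infinity>y\<in>{y. prefix e y}. (h y)\<^sup>2)"
    by (rule sum.cong) (use own in \<open>auto simp: Tset_def energy\<close>)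
  also have "\<dots> = (\<Sum>\<^sub>\<infinity>y\<in>(\<Union>e\<in>Tset. {y. prefix e y}). (h y)\<^sup>2)"
  proof (rule sum_infsum[OF finT])
    show "\<And>e. e \<in> Tset \<Longrightarrow> (\<lambda>y. (h y)\<^sup>2) summable_on {y. prefix e y}"
      by (rule sqs_subset[OF sqsh[OF ctx]])
    show "\<And>a a'. a \<in> Tset \<Longrightarrow> a' \<in> Tset \<Longrightarrow> a \<noteq> a' \<Longrightarrow> {y. prefix a y} \<inter> {y. prefix a' y} = {}"
      using own stop_eq[OF stE] unfolding Tset_def by blast
  qed
  also have "\<dots> \<le> N h" unfolding N_def
    by (rule infsum_mono_neutral) (use sqs_subset[OF sqsh[OF ctx]] sqsh[OF ctx] in \<open>auto simp: sqs_def\<close>)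
  finally have s4: "(\<Sum>e\<in>Tset. h e) \<le> N h" .
  have "(\<Sum>t\<in>A. h t) \<le> (\<Sum>e\<in>Tset. h e)" unfolding s1 s2 by (rule sum_mono) (rule inner)
  thus ?thesis using s4 by simp
qed

lemma bound3: assumes "stopping_time S"
  shows "(\<Sum>\<^sub>\<infinity>\<kappa>\<in>S. ennreal \<bar>h \<kappa>\<bar>) \<le> 2 * ennreal (N h)"
proof -
  have "(\<Sum>\<^sub>\<infinity>\<kappa>\<in>S. ennreal \<bar>h \<kappa>\<bar>) = (SUP A\<in>{A. finite A \<and> A \<subseteq> S}. (\<Sum>\<kappa>\<in>A. ennreal \<bar>h \<kappa>\<bar>))"
    by (rule nonneg_infsum_complete) auto
  also have "\<dots> \<le> ennreal (N h)"
  proof (rule SUP_least)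
    fix A assume A: "A \<in> {A. finite A \<and> A \<subseteq> S}"
    have "(\<Sum>\<kappa>\<in>A. ennreal \<bar>h \<kappa>\<bar>) = ennreal (\<Sum>\<kappa>\<in>A. h \<kappa>)"
      using nonneg[OF ctx] by (simp add: sum_ennreal)
    also have "\<dots> \<le> ennreal (N h)" using fin_bound[OF assms] A by (auto intro: ennreal_leI)
    finally show "(\<Sum>\<kappa>\<in>A. ennreal \<bar>h \<kappa>\<bar>) \<le> ennreal (N h)" .
  qed
  also have "\<dots> \<le> 2 * ennreal (N h)"
    by (metis add_increasing2 mult_2 order_refl zero_le)
  finally show ?thesis .
qed

end



lemma fin_le_N: assumes "sqs f" "finite A" shows "(\<Sum>x\<in>A. (f x)\<^sup>2) \<le> N f"
proof -
  have "(\<Sum>x\<in>A. (f x)\<^sup>2) = (\<Sum>\<^sub>\<infinity>x\<in>A. (f x)\<^sup>2)" using assms(2) by simp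
  also have "\<dots> \<le> N f" unfolding N_def
    by (rule infsum_mono_neutral) (use assms in \<open>auto simp: sqs_def\<close>)
  finally show ?thesis .
qed

lemma term_le_N: "sqs f \<Longrightarrow> (f x)\<^sup>2 \<le> N f"
  using fin_le_N[of f "{x}"] by simp

lemma adm_mid: assumes "admissible E F f" "admissible E F g"
  shows "admissible E F (\<lambda>x. (f x + g x) / 2)"
proof -
  have "Iop (\<lambda>x. (f x + g x) / 2) y = (Iop f y + Iop g y) / 2" for y
    unfolding Iop_def by (simp add: sum_divide_distrib[symmetric] sum.distrib)
  note eq = this
  show ?thesis unfolding admissible_def
  proof (intro conjI ballI allI impI)
    fix y assume "y \<in> F"
    hence "Iop f y \<ge> 1" "Iop g y \<ge> 1" using assms unfolding admissible_def by auto
    thus "1 \<le> Iop (\<lambda>x. (f x + g x) / 2) y" unfolding eq by simp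
  next
    fix x assume "(f x + g x) / 2 \<noteq> 0"
    hence "f x \<noteq> 0 \<or> g x \<noteq> 0" by auto
    thus "\<exists>e\<in>E. prefix e x" using assms unfolding admissible_def by auto
  qed
qed

lemma sqs_lin: assumes "sqs f" "sqs g" shows "sqs (\<lambda>x. (f x + s * g x) / 2)"
proof -
  have "(\<lambda>x. (f x)\<^sup>2 + (g x)\<^sup>2) summable_on UNIV"
    using assms unfolding sqs_def by (rule summable_on_add)
  hence "(\<lambda>x. (1 + s\<^sup>2) * ((f x)\<^sup>2 + (g x)\<^sup>2)) summable_on UNIV"
    by (rule summable_on_cmult_right)
  thus ?thesis unfolding sqs_def
  proof (rule summable_on_comparison_test)
    fix x
    have id: "(f x + s * g x)\<^sup>2 + (f x - s * g x)\<^sup>2 = 2 * ((f x)\<^sup>2 + (s * g x)\<^sup>2)"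
      by (simp add: power2_eq_square algebra_simps)
    have "(f x - s * g x)\<^sup>2 \<ge> 0" by simp
    hence "(f x + s * g x)\<^sup>2 \<le> 2 * ((f x)\<^sup>2 + (s * g x)\<^sup>2)" using id by linarith
    also have "\<dots> \<le> 4 * ((1 + s\<^sup>2) * ((f x)\<^sup>2 + (g x)\<^sup>2))"
    proof -
      have p: "s\<^sup>2 * (f x)\<^sup>2 \<ge> 0" "s\<^sup>2 * (g x)\<^sup>2 \<ge> 0" "(f x)\<^sup>2 \<ge> 0" "(g x)\<^sup>2 \<ge> 0" by simp_all
      have "4 * ((1 + s\<^sup>2) * ((f x)\<^sup>2 + (g x)\<^sup>2)) = 4 * (f x)\<^sup>2 + 4 * (g x)\<^sup>2 + 4 * (s\<^sup>2 * (f x)\<^sup>2) + 4 * (s\<^sup>2 * (g x)\<^sup>2)"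
        by (simp add: algebra_simps)
      moreover have "2 * ((f x)\<^sup>2 + (s * g x)\<^sup>2) = 2 * (f x)\<^sup>2 + 2 * (s\<^sup>2 * (g x)\<^sup>2)"
        by (simp add: power_mult_distrib)
      ultimately show ?thesis using p by linarith
    qed
    finally show "((f x + s * g x) / 2)\<^sup>2 \<le> (1 + s\<^sup>2) * ((f x)\<^sup>2 + (g x)\<^sup>2)"
      by (simp add: power_divide)
  qed simp
qed

lemma parallelogram: assumes "sqs f" "sqs g"
  shows "N (\<lambda>x. (f x + (-1) * g x) / 2) + N (\<lambda>x. (f x + 1 * g x) / 2) = (N f + N g) / 2"
proof -
  have s1: "sqs (\<lambda>x. (f x + (-1) * g x) / 2)" "sqs (\<lambda>x. (f x + 1 * g x) / 2)"
    using sqs_lin[OF assms] by blast+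
  have "N (\<lambda>x. (f x + (-1) * g x) / 2) + N (\<lambda>x. (f x + 1 * g x) / 2)
      = (\<Sum>\<^sub>\<infinity>x. ((f x + (-1) * g x) / 2)\<^sup>2 + ((f x + 1 * g x) / 2)\<^sup>2)"
    unfolding N_def using s1 unfolding sqs_def by (rule infsum_add[symmetric])
  also have "\<dots> = (\<Sum>\<^sub>\<infinity>x. (1/2) * ((f x)\<^sup>2 + (g x)\<^sup>2))"
    by (rule infsum_cong) (simp add: power2_eq_square field_simps)
  also have "\<dots> = (1/2) * (\<Sum>\<^sub>\<infinity>x. (f x)\<^sup>2 + (g x)\<^sup>2)"
    by (rule infsum_cmult_right) (use assms in \<open>simp add: sqs_def summable_on_add\<close>)
  also have "(\<Sum>\<^sub>\<infinity>x. (f x)\<^sup>2 + (g x)\<^sup>2) = N f + N g"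
    unfolding N_def using assms unfolding sqs_def by (rule infsum_add)
  finally show ?thesis by simp
qed

lemma aux_lin: fixes u v w p q :: real shows "u < w + p \<Longrightarrow> v < w + q \<Longrightarrow> 2 * (u + v) - 4 * w \<le> 2 * (p + q)"
proof -
  assume a: "u < w + p" and b: "v < w + q"
  have "u + v < (w + p) + (w + q)" using add_strict_mono[OF a b] .
  hence "2 * (u + v) < 2 * ((w + p) + (w + q))" by simp
  thus ?thesis by (simp add: algebra_simps)
qed

lemma exists_min:
  assumes fin: "Cap E F < \<infinity>"
  shows "\<exists>h. Mini E F h \<and> l2sq h = Cap E F"
proof -
  define c where "c = enn2real (Cap E F)"
  have Capc: "Cap E F = ennreal c" unfolding c_def using fin by simp
  have c0: "c \<ge> 0" unfolding c_def by simp
  have lowc: "c \<le> N g" if "admissible E F g" "sqs g" for g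
  proof -
    have "Cap E F \<le> l2sq g" unfolding Cap_def by (rule INF_lower) (use that in simp)
    hence "ennreal c \<le> ennreal (N g)" using Capc l2sq_eq[OF that(2)] by simp
    moreover have "N g \<ge> 0" unfolding N_def by (rule infsum_nonneg) auto
    ultimately show ?thesis by simp
  qed
  have "\<exists>f. admissible E F f \<and> l2sq f < ennreal (c + 1 / (Suc n))" for n
  proof -
    have "Cap E F < ennreal (c + 1 / Suc n)" unfolding Capc
      by (subst ennreal_less_iff) (use c0 in auto)
    thus ?thesis unfolding Cap_def INF_less_iff by auto
  qed
  then obtain fs where fs: "\<And>n. admissible E F (fs n)" "\<And>n. l2sq (fs n) < ennreal (c + 1 / Suc n)"
    by metis
  have sfs: "sqs (fs n)" for n using fs(2)[of n] by (intro l2sq_fin) (auto simp: less_top[symmetric] dest: order.strict_trans)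
  have Nfs: "N (fs n) < c + 1 / Suc n" for n
  proof -
    have "ennreal (N (fs n)) < ennreal (c + 1 / Suc n)" using fs(2)[of n] l2sq_eq[OF sfs] by simp
    moreover have "N (fs n) \<ge> 0" unfolding N_def by (rule infsum_nonneg) auto
    ultimately show ?thesis by (simp add: ennreal_less_iff)
  qed
  have diff: "(fs n x - fs m x)\<^sup>2 \<le> 2 * (1 / Suc n + 1 / Suc m)" for n m x
  proof -
    define d where "d = (\<lambda>x. (fs n x + (-1) * fs m x) / 2)"
    define mm where "mm = (\<lambda>x. (fs n x + 1 * fs m x) / 2)"
    have "sqs d" "sqs mm" unfolding d_def mm_def using sqs_lin[OF sfs sfs] by blast+
    have "admissible E F mm" unfolding mm_def using adm_mid[OF fs(1) fs(1)] by simp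
    hence "c \<le> N mm" using lowc \<open>sqs mm\<close> by blast
    moreover have "N d + N mm = (N (fs n) + N (fs m)) / 2"
      unfolding d_def mm_def by (rule parallelogram[OF sfs sfs])
    moreover have "(d x)\<^sup>2 \<le> N d" by (rule term_le_N[OF \<open>sqs d\<close>])
    moreover have "(d x)\<^sup>2 = (fs n x - fs m x)\<^sup>2 / 4" by (simp add: d_def power_divide)
    ultimately have "(fs n x - fs m x)\<^sup>2 \<le> 2 * (N (fs n) + N (fs m)) - 4 * c" by linarith
    moreover have "2 * (N (fs n) + N (fs m)) - 4 * c \<le> 2 * (1 / Suc n + 1 / Suc m)"
      using aux_lin[OF Nfs[of n] Nfs[of m]] .
    ultimately show ?thesis by linarith
  qed
  have cauchy: "Cauchy (\<lambda>n. fs n x)" for x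
  proof (rule metric_CauchyI)
    fix e :: real assume e: "e > 0"
    obtain M :: nat where M: "M > 4 / e\<^sup>2" using reals_Archimedean2 by blast
    show "\<exists>M. \<forall>m\<ge>M. \<forall>n\<ge>M. dist (fs m x) (fs n x) < e"
    proof (intro exI allI impI)
      fix m n assume mn: "m \<ge> M" "n \<ge> M"
      have "1 / real (Suc m) \<le> 1 / Suc M" "1 / real (Suc n) \<le> 1 / Suc M"
        using mn by (auto simp: field_simps)
      hence "(fs m x - fs n x)\<^sup>2 \<le> 4 / Suc M" using diff[where n=m and m=n and x=x] by simp
      also have "4 / Suc M < e\<^sup>2"
      proof -
        have e2: "e\<^sup>2 > 0" using e by simp
        have "4 < e\<^sup>2 * real M" using M e2 by (simp add: divide_less_eq mult.commute)
        moreover have "e\<^sup>2 * real (Suc M) = e\<^sup>2 + e\<^sup>2 * real M" by (simp add: algebra_simps)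
        ultimately have "4 < e\<^sup>2 * real (Suc M)" using e2 by linarith
        thus ?thesis by (simp add: divide_less_eq mult.commute)
      qed
      finally have "\<bar>fs m x - fs n x\<bar>\<^sup>2 < e\<^sup>2" by simp
      hence "\<bar>fs m x - fs n x\<bar> < e" by (rule power_less_imp_less_base) (use e in simp)
      thus "dist (fs m x) (fs n x) < e" by (simp add: dist_real_def)
    qed
  qed
  define h where "h x = lim (\<lambda>n. fs n x)" for x
  have lim: "(\<lambda>n. fs n x) \<longlonglongrightarrow> h x" for x
    unfolding h_def using cauchy[of x] by (simp add: Cauchy_convergent_iff convergent_LIMSEQ_iff)
  have admh: "admissible E F h" unfolding admissible_def
  proof (intro conjI ballI allI impI)
    fix f assume f: "f \<in> F"
    have "(\<lambda>n. Iop (fs n) f) \<longlonglongrightarrow> Iop h f"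
      unfolding Iop_def by (intro tendsto_sum lim)
    moreover have "\<forall>n. Iop (fs n) f \<ge> 1" using fs(1) f unfolding admissible_def by blast
    ultimately show "Iop h f \<ge> 1" by (intro LIMSEQ_le_const) auto
  next
    fix x assume hx: "h x \<noteq> 0"
    have "\<exists>n. fs n x \<noteq> 0"
    proof (rule ccontr)
      assume "\<not> ?thesis"
      hence "(\<lambda>n. fs n x) \<longlonglongrightarrow> 0" by simp
      hence "h x = 0" using lim[of x] LIMSEQ_unique by blast
      thus False using hx by simp
    qed
    thus "\<exists>e\<in>E. prefix e x" using fs(1) unfolding admissible_def by blast
  qed
  have finh: "(\<Sum>x\<in>A. (h x)\<^sup>2) \<le> c" if A: "finite A" for A
  proof -
    have "(\<lambda>n. \<Sum>x\<in>A. (fs n x)\<^sup>2) \<longlonglongrightarrow> (\<Sum>x\<in>A. (h x)\<^sup>2)"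
      by (intro tendsto_sum tendsto_power lim)
    moreover have "(\<lambda>n. c + 1 / real (Suc n)) \<longlonglongrightarrow> c + 0"
      by (intro tendsto_add tendsto_const LIMSEQ_inverse_real_of_nat[unfolded inverse_eq_divide])
    moreover have "\<forall>n. (\<Sum>x\<in>A. (fs n x)\<^sup>2) \<le> c + 1 / real (Suc n)"
      using fin_le_N[OF sfs A] Nfs by (meson less_imp_le order.trans)
    ultimately show ?thesis by (intro LIMSEQ_le[where X="\<lambda>n. \<Sum>x\<in>A. (fs n x)\<^sup>2"]) auto
  qed
  have sh: "sqs h" unfolding sqs_def
    by (rule nonneg_bdd_above_summable_on) (auto intro!: bdd_aboveI[where M=c] finh)
  have Nh: "N h \<le> c" unfolding N_def
    by (rule infsum_le_finite_sums) (use sh finh in \<open>auto simp: sqs_def\<close>)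
  have "Mini E F h" unfolding Mini_def using admh sh Nh lowc by force
  moreover have "l2sq h = Cap E F"
  proof (rule antisym)
    show "l2sq h \<le> Cap E F" unfolding l2sq_eq[OF sh] Capc using Nh by (simp add: ennreal_leI)
    show "Cap E F \<le> l2sq h" unfolding Cap_def by (rule INF_lower) (use admh in simp)
  qed
  ultimately show ?thesis by blast
qed




definition GOOD :: "vertex set \<Rightarrow> vertex set \<Rightarrow> (vertex \<Rightarrow> real) \<Rightarrow> bool" where
  "GOOD E F h \<longleftrightarrow> admissible E F h \<and> (\<forall>x. 0 \<le> h x)
    \<and> (\<forall>x. (\<exists>e\<in>E. prefix e x) \<longrightarrow> x \<notin> F \<longrightarrow> h x = h (x @ [True]) + h (x @ [False]))
    \<and> (\<forall>x. x \<in> geod_union E F \<longrightarrow> h x > 0) \<and> (\<forall>x. x \<notin> geod_union E F \<longrightarrow> h x = 0)"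

lemma min_good:
  assumes "stopping_time E" "stopping_time F" "E \<inter> F = {}" "succ_st F E" "Mini E F h"
  shows "GOOD E F h"
  unfolding GOOD_def using adm[OF assms] nonneg[OF assms] conservation[OF assms]
    positive_geod[OF assms] zero_off_geod[OF assms] by blast

lemma good_harmonic: assumes "GOOD E F h" shows "harmonic_on (UNIV - (E \<union> F)) (Iop h)"
  unfolding harmonic_on_def
proof (intro allI impI)
  fix x assume ip: "interior_pt (UNIV - (E \<union> F)) x"
  hence x0: "x \<noteq> []" and xE: "x \<notin> E" and xF: "x \<notin> F" and cT: "x @ [True] \<notin> E"
    and cF: "x @ [False] \<notin> E"
    unfolding interior_pt_def by auto
  have adm: "admissible E F h" using assms unfolding GOOD_def by blast
  have cons: "h x = h (x @ [True]) + h (x @ [False])"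
  proof (cases "\<exists>e\<in>E. prefix e x")
    case True thus ?thesis using assms xF unfolding GOOD_def by blast
  next
    case False
    have "h y = 0" if "y \<in> {x, x @ [True], x @ [False]}" for y
    proof (rule ccontr)
      assume "h y \<noteq> 0"
      then obtain e where e: "e \<in> E" "prefix e y" using adm unfolding admissible_def by blast
      show False
      proof (cases "y = x")
        case True thus False using False e by blast
      next
        case yx: False
        hence "y = x @ [True] \<or> y = x @ [False]" using that by auto
        then obtain b where yb: "y = x @ [b]" by blast
        hence "e = x @ [b] \<or> prefix e x" using e(2) by (simp add: prefix_snoc)
        thus False using e cT cF False by (cases b) auto
      qed
    qed
    thus ?thesis by simp
  qed
  have "Iop h x = Iop h (butlast x) + h x" by (rule Iop_butlast[OF x0])
  moreover have "Iop h (x @ [b]) = Iop h x + h (x @ [b])" for b by (rule Iop_snoc)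
  ultimately show "Iop h x = (Iop h (butlast x) + Iop h (x @ [True]) + Iop h (x @ [False])) / 3"
    using cons by simp
qed

lemma geod_sub: "x \<in> geod_union E F \<Longrightarrow> \<exists>e\<in>E. prefix e x"
  unfolding geod_union_def by blast

lemma delta_fin:
  assumes "e \<notin> F'" "\<forall>f\<in>F'. prefix e f"
  shows "Cap {e} F' < \<infinity>"
proof -
  define d where "d y = (if y = e then 1 else (0::real))" for y
  have "admissible {e} F' d" unfolding admissible_def
  proof (intro conjI ballI allI impI)
    fix f assume "f \<in> F'"
    hence "prefix e f" using assms by blast
    thus "1 \<le> Iop d f" unfolding Iop_def d_def by (simp add: sum.delta)
  next
    fix x assume "d x \<noteq> 0" thus "\<exists>e'\<in>{e}. prefix e' x" by (simp add: d_def split: if_splits)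
  qed
  hence "Cap {e} F' \<le> l2sq d" unfolding Cap_def by (intro INF_lower) simp
  also have "l2sq d = (\<Sum>\<^sub>\<infinity>x\<in>{e}. ennreal ((d x)\<^sup>2))" unfolding l2sq_def
    by (rule infsum_cong_neutral) (auto simp: d_def)
  also have "\<dots> = 1" by (simp add: d_def)
  finally show ?thesis by (simp add: le_less_trans)
qed

context
  fixes E F :: "vertex set"
  assumes stE: "stopping_time E" and stF: "stopping_time F" and disj: "E \<inter> F = {}"
    and succ: "succ_st F E"
begin

definition Fe where "Fe e = {f \<in> F. prefix e f}"

lemma hyp_e: assumes "e \<in> E"
  shows "stopping_time {e}" "stopping_time (Fe e)" "{e} \<inter> Fe e = {}" "succ_st (Fe e) {e}"
proof -
  show "stopping_time {e}" unfolding stopping_time_def by simp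
  show "stopping_time (Fe e)" using stF unfolding stopping_time_def Fe_def by auto
  show "{e} \<inter> Fe e = {}" using disj assms unfolding Fe_def by auto
  show "succ_st (Fe e) {e}" unfolding succ_st_def Fe_def strict_prefix_def using disj assms by blast
qed

lemma ex_he: assumes "e \<in> E" shows "\<exists>h. GOOD {e} (Fe e) h"
proof -
  have "Cap {e} (Fe e) < \<infinity>"
    by (rule delta_fin) (use disj assms in \<open>auto simp: Fe_def\<close>)
  then obtain h where "Mini {e} (Fe e) h" using exists_min by blast
  thus ?thesis using min_good[OF hyp_e[OF assms]] by blast
qed

definition he where "he e = (SOME h. GOOD {e} (Fe e) h)"

lemma he_good: "e \<in> E \<Longrightarrow> GOOD {e} (Fe e) (he e)"
  unfolding he_def using ex_he by (rule someI_ex)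

definition own where "own x = (THE e. e \<in> E \<and> prefix e x)"

lemma own_eq: "e \<in> E \<Longrightarrow> prefix e x \<Longrightarrow> own x = e"
  unfolding own_def by (rule the_equality) (use stop_eq[OF stE] in blast)+

definition hg where "hg x = (if \<exists>e\<in>E. prefix e x then he (own x) x else 0)"

lemma hg_eq: "e \<in> E \<Longrightarrow> prefix e x \<Longrightarrow> hg x = he e x"
  unfolding hg_def using own_eq by auto

lemma he_supp: "e \<in> E \<Longrightarrow> he e y \<noteq> 0 \<Longrightarrow> prefix e y"
  using he_good unfolding GOOD_def admissible_def by blast

lemma geod_iff: assumes "e \<in> E" "prefix e x"
  shows "x \<in> geod_union E F \<longleftrightarrow> x \<in> geod_union {e} (Fe e)"
proof
  assume "x \<in> geod_union E F"
  then obtain f y where f: "f \<in> F" "y \<in> E" "strict_prefix y f" "prefix y x" "prefix x f"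
    unfolding geod_union_def by blast
  have ye: "y = e" using stop_eq[OF stE f(2) assms(1) f(4) assms(2)] .
  hence "prefix e f" using f(3) by (simp add: strict_prefix_def)
  thus "x \<in> geod_union {e} (Fe e)" using f ye unfolding geod_union_def Fe_def by blast
next
  assume "x \<in> geod_union {e} (Fe e)"
  thus "x \<in> geod_union E F" using assms unfolding geod_union_def Fe_def by blast
qed

lemma hg_good: "GOOD E F hg"
  unfolding GOOD_def
proof (intro conjI allI impI)
  show "admissible E F hg" unfolding admissible_def
  proof (intro conjI ballI allI impI)
    fix f assume f: "f \<in> F"
    then obtain e where e: "e \<in> E" "strict_prefix e f" using succ unfolding succ_st_def by blast
    have "Iop hg f = Iop (he e) f" unfolding Iop_def
    proof (rule sum.cong)
      fix y assume y: "y \<in> {y. prefix y f}"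
      show "hg y = he e y"
      proof (cases "\<exists>e'\<in>E. prefix e' y")
        case True
        then obtain e' where e': "e' \<in> E" "prefix e' y" by blast
        have "prefix e' f" using e' y by (auto intro: prefix_order.trans)
        hence "e' = e" using stop_eq[OF stE e'(1) e(1)] e(2) by auto
        thus ?thesis using hg_eq e' by simp
      next
        case False
        hence "he e y = 0" using he_supp[OF e(1)] e(1) by blast
        thus ?thesis using False by (simp add: hg_def)
      qed
    qed simp
    moreover have "f \<in> Fe e" using f e by (simp add: Fe_def)
    ultimately show "1 \<le> Iop hg f" using he_good[OF e(1)] unfolding GOOD_def admissible_def by simp
  next
    fix x assume "hg x \<noteq> 0" thus "\<exists>e\<in>E. prefix e x" unfolding hg_def by (auto split: if_splits)
  qed
next
  fix x show "0 \<le> hg x" unfolding hg_def using he_good own_eq by (auto simp: GOOD_def)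
next
  fix x assume ex: "\<exists>e\<in>E. prefix e x" and xF: "x \<notin> F"
  then obtain e where e: "e \<in> E" "prefix e x" by blast
  have pb: "prefix e (x @ [b])" for b using e by (auto intro: prefix_order.trans)
  have "x \<notin> Fe e" using xF by (simp add: Fe_def)
  hence "he e x = he e (x @ [True]) + he e (x @ [False])"
    using he_good[OF e(1)] e unfolding GOOD_def by blast
  thus "hg x = hg (x @ [True]) + hg (x @ [False])" using hg_eq[OF e(1)] e pb by simp
next
  fix x assume g: "x \<in> geod_union E F"
  then obtain e where e: "e \<in> E" "prefix e x" using geod_sub by blast
  have "x \<in> geod_union {e} (Fe e)" using geod_iff[OF e] g by simp
  thus "hg x > 0" using he_good[OF e(1)] hg_eq[OF e] unfolding GOOD_def by simp
next
  fix x assume g: "x \<notin> geod_union E F"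
  show "hg x = 0"
  proof (cases "\<exists>e\<in>E. prefix e x")
    case True
    then obtain e where e: "e \<in> E" "prefix e x" by blast
    have "x \<notin> geod_union {e} (Fe e)" using geod_iff[OF e] g by simp
    thus ?thesis using he_good[OF e(1)] hg_eq[OF e] unfolding GOOD_def by simp
  qed (simp add: hg_def)
qed

end

theorem mainTheorem6:
  fixes E F :: "vertex set"
  assumes "stopping_time E" and "stopping_time F" and "E \<inter> F = {}" and "succ_st F E"
  shows "\<exists>h. admissible E F h \<and> Cap E F = l2sq h
           \<and> harmonic_on (UNIV - (E \<union> F)) (Iop h)
           \<and> (\<forall>S. stopping_time S \<longrightarrow> (\<Sum>\<^sub>\<infinity>\<kappa>\<in>S. ennreal \<bar>h \<kappa>\<bar>) \<le> 2 * Cap E F)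
           \<and> (\<forall>x. (x \<in> geod_union E F \<longrightarrow> h x > 0) \<and> (x \<notin> geod_union E F \<longrightarrow> h x = 0))"
proof (cases "Cap E F < \<infinity>")
  case True
  then obtain h where m: "Mini E F h" and l: "l2sq h = Cap E F" using exists_min by blast
  have g: "GOOD E F h" by (rule min_good[OF assms m])
  have "Cap E F = ennreal (N h)" using l l2sq_eq[OF sqsh[OF assms m]] by simp
  hence b: "\<forall>S. stopping_time S \<longrightarrow> (\<Sum>\<^sub>\<infinity>\<kappa>\<in>S. ennreal \<bar>h \<kappa>\<bar>) \<le> 2 * Cap E F"
    using bound3[OF assms m] by simp
  show ?thesis
    using g good_harmonic[OF g] b l unfolding GOOD_def by (intro exI[of _ h]) auto
next
  case False
  hence top: "Cap E F = \<infinity>" by (metis less_top infinity_ennreal_def)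
  define h where "h = hg E F"
  have g: "GOOD E F h" unfolding h_def by (rule hg_good[OF assms])
  have "Cap E F \<le> l2sq h" unfolding Cap_def by (rule INF_lower) (use g in \<open>simp add: GOOD_def\<close>)
  hence l: "Cap E F = l2sq h" using top by (simp add: top_unique)
  have b: "\<forall>S. stopping_time S \<longrightarrow> (\<Sum>\<^sub>\<infinity>\<kappa>\<in>S. ennreal \<bar>h \<kappa>\<bar>) \<le> 2 * Cap E F"
    using top by (simp add: ennreal_mult_top)
  show ?thesis
    using g good_harmonic[OF g] b l unfolding GOOD_def by (intro exI[of _ h]) auto
qed


end
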